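(* Let $\mathcal{D}\subset Y\times Y$. The function $z\mapsto\operatorname{dist}(z,\mathcal{D})$ is $(p,q)$-coercive if and only if there are $c_1\in\mathbb{R}$ and $c_2>0$ such that $\mathcal{D}\subset\{(\epsilon,\tilde\sigma)\in Y\times Y: c_1\,\epsilon\cdot\tilde\sigma+c_2>|\epsilon|^p+|\tilde\sigma|^q\}$.
   Context: $1<p<\infty$, $q=p/(p-1)$, $Y=\{A\in\mathbb{R}^{d\times d}:A=A^T,\operatorname{tr}A=0\}$ with Frobenius product $\cdot$ and norm $|\cdot|$. $\operatorname{dist}((\epsilon,\tilde\sigma),\mathcal{D})=\inf_{(\epsilon',\tilde\sigma')\in\mathcal{D}}\big(\frac1p|\epsilon-\epsilon'|^p+\frac1q|\tilde\sigma-\tilde\sigma'|^q\big)$. A function $F:Y\times Y\to\mathbb{R}$ is $(p,q)$-coercive if there exist $C_1,C_2>0$, $\gamma\in\mathbb{R}$ with $F(\epsilon,\tilde\sigma)\ge C_1(|\epsilon|^p+|\tilde\sigma|^q)-C_2-\gamma\,\epsilon\cdot\tilde\sigma$ for all $(\epsilon,\tilde\sigma)$. *)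

theory Defs
  imports "HOL-Analysis.Analysis" "HOL-Library.Extended_Real"
begin

text \<open>Y: symmetric trace-free real d x d matrices. On real^'d^'d, inner is the
Frobenius product and norm the Frobenius norm.\<close>

definition Ysym :: "(real^'d^'d) set" where
  "Ysym = {A. transpose A = A \<and> trace A = 0}"

text \<open>Distance to a set D, valued in extended reals (infimum of the empty set is +infinity).\<close>
definition distD :: "real \<Rightarrow> real \<Rightarrow> ((real^'d^'d) \<times> (real^'d^'d)) set
    \<Rightarrow> (real^'d^'d) \<times> (real^'d^'d) \<Rightarrow> ereal" where
  "distD p q D z = (INF w\<in>D. ereal ((1/p) * norm (fst z - fst w) powr p
                                   + (1/q) * norm (snd z - snd w) powr q))"

definition pq_coercive :: "real \<Rightarrow> real \<Rightarrow>
    ((real^'d^'d) \<times> (real^'d^'d) \<Rightarrow> ereal) \<Rightarrow> bool" where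
  "pq_coercive p q F \<longleftrightarrow> (\<exists>C1 C2 \<gamma>. C1 > 0 \<and> C2 > 0 \<and>
     (\<forall>e\<in>Ysym. \<forall>s\<in>Ysym.
        F (e, s) \<ge> ereal (C1 * (norm e powr p + norm s powr q) - C2 - \<gamma> * (e \<bullet> s))))"

end

theory Submission
  imports Defs
begin

lemma young1:
  fixes p q x y :: real
  assumes "p>1" "q>1" "1/p+1/q=1" "x\<ge>0" "y\<ge>0"
  shows "x*y \<le> x powr p + y powr q"
proof -
  have "x*y \<le> x powr p / p + y powr q / q" using Youngs_inequality assms by blast
  also have "x powr p / p \<le> x powr p" using mult_left_mono[of 1 p "x powr p"] assms by (simp add: divide_le_eq)
  also have "y powr q / q \<le> y powr q" using mult_left_mono[of 1 q "y powr q"] assms by (simp add: divide_le_eq)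
  finally show ?thesis by simp
qed

lemma youngt:
  fixes p q x y t :: real
  assumes "p>1" "q>1" "1/p+1/q=1" "x\<ge>0" "y\<ge>0" "t>0"
  shows "x*y \<le> t * x powr p + t powr (1-q) * y powr q"
proof -
  have e: "x*y = (t powr (1/p) * x) * (t powr (-1/p) * y)"
    using assms by (simp add: powr_minus_divide field_simps powr_add[symmetric])
  have "x*y \<le> (t powr (1/p) * x) powr p + (t powr (-1/p) * y) powr q"
    unfolding e by (rule young1) (use assms in auto)
  also have "(t powr (1/p) * x) powr p = t * x powr p"
    using assms by (simp add: powr_mult powr_powr)
  also have "-1/p*q = 1 - q" using assms by (simp add: field_simps)
  then have "(t powr (-1/p) * y) powr q = t powr (1-q) * y powr q"
    using assms by (simp add: powr_mult powr_powr)
  finally show ?thesis .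
qed

lemma sum_pow:
  fixes x y r :: real
  assumes "x\<ge>0" "y\<ge>0" "r\<ge>0"
  shows "(x+y) powr r \<le> 2 powr r * (x powr r + y powr r)"
proof -
  have "(x+y) powr r \<le> (2 * max x y) powr r" by (rule powr_mono2) (use assms in auto)
  also have "\<dots> = 2 powr r * max x y powr r" using assms by (simp add: powr_mult)
  also have "max x y powr r \<le> x powr r + y powr r" by (simp add: max_def)
  finally show ?thesis by simp
qed

lemma core:
  fixes e s e' s' :: "'a::real_inner" and p q k c1 c2 m M :: real
  assumes pq: "p>1" "q>1" "1/p+1/q=1" and k: "k>0"
    and m: "m = min (1/p) (1/q)" and km: "k \<le> m" and kc: "k*\<bar>c1\<bar> \<le> m/6"
    and k1: "(m/6) powr (1-q) * (k*\<bar>c1\<bar>) powr q \<le> k/2"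
    and k2: "(m/6) powr (1-p) * (k*\<bar>c1\<bar>) powr p \<le> k/2"
    and M: "M = 2 powr p + 2 powr q"
    and h: "norm e' powr p + norm s' powr q < c1*(e' \<bullet> s') + c2"
  shows "k/(2*M) * (norm e powr p + norm s powr q) - k*c2 - k*c1*(e \<bullet> s)
     \<le> norm(e-e') powr p/p + norm(s-s') powr q/q"
proof -
  define A B E S where "A = norm(e-e')" "B = norm(s-s')" "E = norm e'" "S = norm s'"
  have pos: "A\<ge>0" "B\<ge>0" "E\<ge>0" "S\<ge>0" unfolding A_B_E_S_def by auto
  have mpos: "m > 0" using m pq by auto
  have Mpos: "M > 0" using M by (simp add: add_pos_pos)
  have d: "m*(A powr p + B powr q) \<le> A powr p/p + B powr q/q"
  proof -
    have "m * A powr p \<le> (1/p) * A powr p" using m by (intro mult_right_mono) auto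
    moreover have "m * B powr q \<le> (1/q) * B powr q" using m by (intro mult_right_mono) auto
    ultimately show ?thesis by (simp add: distrib_left)
  qed
  have ine: "norm e powr p \<le> 2 powr p * (A powr p + E powr p)"
  proof -
    have "norm e \<le> A + E" unfolding A_B_E_S_def using norm_triangle_ineq[of "e-e'" e'] by simp
    then have "norm e powr p \<le> (A+E) powr p" by (intro powr_mono2) (use pq in auto)
    also have "\<dots> \<le> 2 powr p * (A powr p + E powr p)" by (rule sum_pow) (use pos pq in auto)
    finally show ?thesis .
  qed
  have ins: "norm s powr q \<le> 2 powr q * (B powr q + S powr q)"
  proof -
    have "norm s \<le> B + S" unfolding A_B_E_S_def using norm_triangle_ineq[of "s-s'" s'] by simp
    then have "norm s powr q \<le> (B+S) powr q" by (intro powr_mono2) (use pq in auto)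
    also have "\<dots> \<le> 2 powr q * (B powr q + S powr q)" by (rule sum_pow) (use pos pq in auto)
    finally show ?thesis .
  qed
  have a: "norm e powr p + norm s powr q \<le> M * (A powr p + B powr q + E powr p + S powr q)"
  proof -
    have "2 powr p * (A powr p + E powr p) \<le> M * (A powr p + E powr p)"
      using M pos by (intro mult_right_mono) auto
    moreover have "2 powr q * (B powr q + S powr q) \<le> M * (B powr q + S powr q)"
      using M pos by (intro mult_right_mono) auto
    ultimately show ?thesis using ine ins by (simp add: algebra_simps)
  qed
  have eq: "e \<bullet> s - e' \<bullet> s' = (e-e') \<bullet> (s-s') + (e-e') \<bullet> s' + e' \<bullet> (s-s')"
    by (simp add: inner_diff_left inner_diff_right)
  have cs: "\<bar>e \<bullet> s - e' \<bullet> s'\<bar> \<le> A*B + A*S + E*B"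
  proof -
    have "\<bar>e \<bullet> s - e' \<bullet> s'\<bar> \<le> \<bar>(e-e') \<bullet> (s-s')\<bar> + \<bar>(e-e') \<bullet> s'\<bar> + \<bar>e' \<bullet> (s-s')\<bar>"
      unfolding eq by linarith
    also have "\<dots> \<le> A*B + A*S + E*B" unfolding A_B_E_S_def
      by (intro add_mono Cauchy_Schwarz_ineq2)
    finally show ?thesis .
  qed
  have t1: "k*\<bar>c1\<bar>*(A*B) \<le> (m/6) * (A powr p + B powr q)"
  proof -
    have "k*\<bar>c1\<bar>*(A*B) \<le> k*\<bar>c1\<bar>*(A powr p + B powr q)"
      by (intro mult_left_mono young1) (use pq pos k in auto)
    also have "\<dots> \<le> (m/6) * (A powr p + B powr q)"
      by (intro mult_right_mono kc) auto
    finally show ?thesis .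
  qed
  have t2: "k*\<bar>c1\<bar>*(A*S) \<le> (m/6) * A powr p + k/2 * S powr q"
  proof -
    have "k*\<bar>c1\<bar>*(A*S) = A * (k*\<bar>c1\<bar>*S)" by simp
    also have "\<dots> \<le> (m/6) * A powr p + (m/6) powr (1-q) * (k*\<bar>c1\<bar>*S) powr q"
      by (rule youngt) (use pq pos k mpos in auto)
    also have "(k*\<bar>c1\<bar>*S) powr q = (k*\<bar>c1\<bar>) powr q * S powr q"
      using k pos by (simp add: powr_mult)
    also have "(m/6) powr (1-q) * ((k*\<bar>c1\<bar>) powr q * S powr q) \<le> k/2 * S powr q"
      using mult_right_mono[OF k1, of "S powr q"] by (simp add: mult.assoc)
    finally show ?thesis by simp
  qed
  have t3: "k*\<bar>c1\<bar>*(E*B) \<le> (m/6) * B powr q + k/2 * E powr p"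
  proof -
    have "k*\<bar>c1\<bar>*(E*B) = B * (k*\<bar>c1\<bar>*E)" by simp
    also have "\<dots> \<le> (m/6) * B powr q + (m/6) powr (1-p) * (k*\<bar>c1\<bar>*E) powr p"
      by (rule youngt) (use pq pos k mpos in \<open>auto simp: add.commute\<close>)
    also have "(k*\<bar>c1\<bar>*E) powr p = (k*\<bar>c1\<bar>) powr p * E powr p"
      using k pos by (simp add: powr_mult)
    also have "(m/6) powr (1-p) * ((k*\<bar>c1\<bar>) powr p * E powr p) \<le> k/2 * E powr p"
      using mult_right_mono[OF k2, of "E powr p"] by (simp add: mult.assoc)
    finally show ?thesis by simp
  qed
  have hk: "k*(E powr p + S powr q) < k*c1*(e' \<bullet> s') + k*c2"
    using mult_strict_left_mono[OF h k] unfolding A_B_E_S_def by (simp add: algebra_simps)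
  have dev: "k*c1*(e' \<bullet> s') - k*c1*(e \<bullet> s) \<le> k*\<bar>c1\<bar>*(A*B + A*S + E*B)"
  proof -
    have "k*c1*(e' \<bullet> s') - k*c1*(e \<bullet> s) \<le> \<bar>k*c1\<bar> * \<bar>e \<bullet> s - e' \<bullet> s'\<bar>"
      by (simp add: abs_mult[symmetric] right_diff_distrib)
    also have "\<dots> \<le> k*\<bar>c1\<bar>*(A*B + A*S + E*B)"
      using cs k by (simp add: abs_mult mult_left_mono)
    finally show ?thesis .
  qed
  have aa: "k/(2*M) * (norm e powr p + norm s powr q) \<le> k/2 * (A powr p + B powr q + E powr p + S powr q)"
  proof -
    have "k/(2*M) * (norm e powr p + norm s powr q) \<le> k/(2*M) * (M * (A powr p + B powr q + E powr p + S powr q))"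
      using a k Mpos by (intro mult_left_mono) auto
    then show ?thesis using Mpos by simp
  qed
  have fin: "k/2 * (A powr p + B powr q) \<le> (2*m/3) * (A powr p + B powr q)"
    using km pos k by (intro mult_right_mono) auto
  show ?thesis unfolding A_B_E_S_def[symmetric]
    using aa fin d t1 t2 t3 hk dev by (simp add: algebra_simps)
qed

lemma powr_cond:
  fixes k c1 m q :: real
  assumes "k>0" "q>1" "(m/6) powr (1-q) * \<bar>c1\<bar> powr q * k powr (q-1) < 1/2"
  shows "(m/6) powr (1-q) * (k*\<bar>c1\<bar>) powr q \<le> k/2"
proof -
  have "(k*\<bar>c1\<bar>) powr q = k * k powr (q-1) * \<bar>c1\<bar> powr q"
  proof -
    have "k powr q = k * k powr (q-1)" using powr_add[of k 1 "q-1"] assms by simp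
    then show ?thesis using assms by (simp add: powr_mult)
  qed
  then have "(m/6) powr (1-q) * (k*\<bar>c1\<bar>) powr q = k * ((m/6) powr (1-q) * \<bar>c1\<bar> powr q * k powr (q-1))"
    by (simp add: algebra_simps)
  also have "\<dots> \<le> k * (1/2)" using assms by (intro mult_left_mono) auto
  finally show ?thesis by simp
qed

lemma ev_small:
  fixes K r :: real assumes "r > 0"
  shows "\<forall>\<^sub>F k in at_right 0. K * k powr r < 1/2"
proof -
  have "((\<lambda>k::real. k powr r) \<longlongrightarrow> 0) (at_right 0)"
    by (rule tendsto_zero_powrI) (auto intro: tendsto_ident_at eventually_at_right_less[THEN eventually_mono] simp: assms)
  then have "((\<lambda>k::real. K * k powr r) \<longlongrightarrow> 0) (at_right 0)"
    using tendsto_mult_right_zero by (metis tendsto_mult_left_zero)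
  then show ?thesis by (rule order_tendstoD(2)) simp
qed

lemma ev_lin:
  fixes c :: real assumes "b > 0"
  shows "\<forall>\<^sub>F k in at_right 0. k * c < b"
proof -
  have "((\<lambda>k::real. k * c) \<longlongrightarrow> 0) (at_right 0)"
    by (intro tendsto_mult_left_zero tendsto_ident_at)
  then show ?thesis by (rule order_tendstoD(2)) (simp add: assms)
qed

theorem lemma5p9:
  fixes p q :: real and D :: "((real^'d^'d) \<times> (real^'d^'d)) set"
  assumes "1 < p" and "q = p / (p - 1)"
    and "D \<subseteq> Ysym \<times> Ysym"
  shows "pq_coercive p q (distD p q D) \<longleftrightarrow>
    (\<exists>c1 c2. c2 > 0 \<and>
       D \<subseteq> {(e, s). e \<in> Ysym \<and> s \<in> Ysym \<and>
                  c1 * (e \<bullet> s) + c2 > norm e powr p + norm s powr q})"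
proof
  assume "pq_coercive p q (distD p q D)"
  then obtain C1 C2 \<gamma> where C: "C1 > 0" "C2 > 0"
    "\<And>e s. e\<in>Ysym \<Longrightarrow> s\<in>Ysym \<Longrightarrow>
        distD p q D (e, s) \<ge> ereal (C1 * (norm e powr p + norm s powr q) - C2 - \<gamma> * (e \<bullet> s))"
    unfolding pq_coercive_def by blast
  show "\<exists>c1 c2. c2 > 0 \<and>
       D \<subseteq> {(e, s). e \<in> Ysym \<and> s \<in> Ysym \<and>
                  c1 * (e \<bullet> s) + c2 > norm e powr p + norm s powr q}"
  proof (intro exI conjI)
    have "C2/C1 > 0" using C by simp
    then show "C2/C1 + 1 > 0" by linarith
    show "D \<subseteq> {(e, s). e \<in> Ysym \<and> s \<in> Ysym \<and>
                  \<gamma>/C1 * (e \<bullet> s) + (C2/C1+1) > norm e powr p + norm s powr q}"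
    proof clarify
      fix e s assume es: "(e, s) \<in> D"
      then have Y: "e \<in> Ysym" "s \<in> Ysym" using assms(3) by auto
      have "distD p q D (e, s) \<le> ereal ((1/p) * norm (e - e) powr p + (1/q) * norm (s - s) powr q)"
        unfolding distD_def using es by (rule INF_lower2) simp
      also have "\<dots> = ereal 0" by simp
      finally have "ereal (C1 * (norm e powr p + norm s powr q) - C2 - \<gamma> * (e \<bullet> s)) \<le> ereal 0"
        using C(3)[OF Y] by (meson order_trans)
      then have "C1 * (norm e powr p + norm s powr q) \<le> C2 + \<gamma> * (e \<bullet> s)" by simp
      then have "norm e powr p + norm s powr q \<le> (C2 + \<gamma> * (e \<bullet> s)) / C1"
        using C by (simp add: field_simps)
      also have "\<dots> < \<gamma>/C1 * (e \<bullet> s) + (C2/C1+1)" using C by (simp add: add_divide_distrib)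
      finally show "e \<in> Ysym \<and> s \<in> Ysym \<and> \<gamma>/C1 * (e \<bullet> s) + (C2/C1+1) > norm e powr p + norm s powr q"
        using Y by simp
    qed
  qed
next
  assume "\<exists>c1 c2. c2 > 0 \<and>
       D \<subseteq> {(e, s). e \<in> Ysym \<and> s \<in> Ysym \<and>
                  c1 * (e \<bullet> s) + c2 > norm e powr p + norm s powr q}"
  then obtain c1 c2 where c2: "c2 > 0" and Dsub: "D \<subseteq> {(e, s). e \<in> Ysym \<and> s \<in> Ysym \<and>
                  c1 * (e \<bullet> s) + c2 > norm e powr p + norm s powr q}" by blast
  have q1: "q > 1" using assms(1,2) by (simp add: less_divide_eq)
  have "1/p+1/q=1" using assms(1,2) q1 by (simp add: field_simps)
  then have pq: "p>1" "q>1" "1/p+1/q=1" using assms(1) q1 by auto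
  define m where "m = min (1/p) (1/q)"
  define M :: real where "M = 2 powr p + 2 powr q"
  have mpos: "m > 0" using pq m_def by auto
  have Mpos: "M > 0" using M_def by (simp add: add_pos_pos)
  have "\<forall>\<^sub>F k in at_right 0. 0 < k \<and> k * 1 < m \<and> k*\<bar>c1\<bar> < m/6
     \<and> (m/6) powr (1-q) * \<bar>c1\<bar> powr q * k powr (q-1) < 1/2
     \<and> (m/6) powr (1-p) * \<bar>c1\<bar> powr p * k powr (p-1) < 1/2"
    using mpos pq
    by (intro eventually_conj eventually_at_right_less ev_lin ev_small) auto
  then obtain k where k: "0 < k" "k * 1 < m" "k*\<bar>c1\<bar> < m/6"
     "(m/6) powr (1-q) * \<bar>c1\<bar> powr q * k powr (q-1) < 1/2"
     "(m/6) powr (1-p) * \<bar>c1\<bar> powr p * k powr (p-1) < 1/2"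
    using eventually_happens[of _ "at_right (0::real)"] by auto
  have k1: "(m/6) powr (1-q) * (k*\<bar>c1\<bar>) powr q \<le> k/2" by (rule powr_cond) (use k pq in auto)
  have k2: "(m/6) powr (1-p) * (k*\<bar>c1\<bar>) powr p \<le> k/2" by (rule powr_cond) (use k pq in auto)
  show "pq_coercive p q (distD p q D)"
    unfolding pq_coercive_def
  proof (intro exI conjI ballI)
    show "k/(2*M) > 0" using k Mpos by simp
    show "k*c2 > 0" using k c2 by simp
    fix e s :: "real^'d^'d"
    show "ereal (k/(2*M) * (norm e powr p + norm s powr q) - k*c2 - (k*c1) * (e \<bullet> s)) \<le> distD p q D (e, s)"
      unfolding distD_def
    proof (rule INF_greatest)
      fix w assume "w \<in> D"
      then obtain e' s' where w: "w = (e', s')" and h: "norm e' powr p + norm s' powr q < c1*(e' \<bullet> s') + c2"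
        using Dsub by (cases w) (auto simp: add.commute)
      have "k/(2*M) * (norm e powr p + norm s powr q) - k*c2 - k*c1*(e \<bullet> s)
     \<le> norm(e-e') powr p/p + norm(s-s') powr q/q"
        by (rule core[OF pq k(1) m_def _ _ k1 k2 M_def h]) (use k in auto)
      then show "ereal (k/(2*M) * (norm e powr p + norm s powr q) - k*c2 - (k*c1) * (e \<bullet> s))
         \<le> ereal (1 / p * norm (fst (e, s) - fst w) powr p + 1 / q * norm (snd (e, s) - snd w) powr q)"
        unfolding w by (simp add: mult.assoc)
    qed
  qed
qed

end
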